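(* Let $k\ge 2$ be an integer, let $G$ be a $(k+1)$-regular graph, and suppose that $S_0$ is a $k$-conversion set of $G$ with $|S_0|=k$. Then $|V(G)-S_0|<\frac{k(k+1)-1}{k-1}$.
   Context: For a graph $G=(V,E)$, a positive integer $k$ and a set $S_0\subseteq V$, the irreversible $k$-threshold conversion process is defined by: for $t=1,2,\dots$, the set of converted vertices at time $t$ is obtained from that at time $t-1$ by adjoining all vertices having at least $k$ neighbours among the vertices converted at time $t-1$ (with $S_0$ converted at time $0$). The set $S_0$ is a $k$-conversion set of $G$ if every vertex of $G$ is eventually converted. *)

theory Defs
  imports Complex_Main
begin

definition simple_graph :: "'a set \<Rightarrow> ('a \<Rightarrow> 'a \<Rightarrow> bool) \<Rightarrow> bool" where
  "simple_graph V E \<longleftrightarrow> finite V \<and> (\<forall>u v. E u v \<longrightarrow> u \<in> V \<and> v \<in> V)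
     \<and> (\<forall>u v. E u v \<longrightarrow> E v u) \<and> (\<forall>v. \<not> E v v)"

definition nbhd :: "'a set \<Rightarrow> ('a \<Rightarrow> 'a \<Rightarrow> bool) \<Rightarrow> 'a \<Rightarrow> 'a set" where
  "nbhd V E v = {u \<in> V. E v u}"

definition regular :: "'a set \<Rightarrow> ('a \<Rightarrow> 'a \<Rightarrow> bool) \<Rightarrow> nat \<Rightarrow> bool" where
  "regular V E r \<longleftrightarrow> (\<forall>v\<in>V. card (nbhd V E v) = r)"

fun converted :: "'a set \<Rightarrow> ('a \<Rightarrow> 'a \<Rightarrow> bool) \<Rightarrow> nat \<Rightarrow> 'a set \<Rightarrow> nat \<Rightarrow> 'a set" where
  "converted V E k S0 0 = S0"
| "converted V E k S0 (Suc t) =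
     converted V E k S0 t \<union> {v \<in> V. card (nbhd V E v \<inter> converted V E k S0 t) \<ge> k}"

definition conversion_set :: "'a set \<Rightarrow> ('a \<Rightarrow> 'a \<Rightarrow> bool) \<Rightarrow> nat \<Rightarrow> 'a set \<Rightarrow> bool" where
  "conversion_set V E k S0 \<longleftrightarrow> S0 \<subseteq> V \<and> (\<forall>v\<in>V. \<exists>t. v \<in> converted V E k S0 t)"

end

theory Submission
  imports Defs
begin

definition phi :: "'a set \<Rightarrow> ('a \<Rightarrow> 'a \<Rightarrow> bool) \<Rightarrow> 'a set \<Rightarrow> nat" where
  "phi V E C = (\<Sum>u\<in>C. card (nbhd V E u - C))"

lemma nbhd_finite: "simple_graph V E \<Longrightarrow> finite (nbhd V E u)"
  by (simp add: simple_graph_def nbhd_def)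

lemma phi_insert:
  assumes G: "simple_graph V E" and v: "v \<in> V" "v \<notin> D" and D: "D \<subseteq> V"
  shows "phi V E (insert v D) + card (nbhd V E v \<inter> D) = phi V E D + card (nbhd V E v - D)"
proof -
  have fD: "finite D" using G D finite_subset by (auto simp: simple_graph_def)
  have nv: "v \<notin> nbhd V E v" using G by (auto simp: simple_graph_def nbhd_def)
  have 1: "nbhd V E v - insert v D = nbhd V E v - D" using nv by auto
  have 2: "card (nbhd V E u - D) = card (nbhd V E u - insert v D) + (if E u v then 1 else 0)"
    if "u \<in> D" for u
  proof (cases "E u v")
    case True
    have eq: "nbhd V E u - D = insert v (nbhd V E u - insert v D)" using True v by (auto simp: nbhd_def)
    have fin: "finite (nbhd V E u - insert v D)" using nbhd_finite[OF G] by auto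
    have "card (nbhd V E u - D) = Suc (card (nbhd V E u - insert v D))"
      unfolding eq using fin by (simp add: card_insert_if)
    then show ?thesis using True by simp
  next
    case False
    have "nbhd V E u - D = nbhd V E u - insert v D" using False by (auto simp: nbhd_def)
    moreover have "(if E u v then 1 else 0::nat) = 0" using False by simp
    ultimately show ?thesis by (simp only: add_0_right)
  qed
  have 3: "(\<Sum>u\<in>D. (if E u v then 1 else 0::nat)) = card (nbhd V E v \<inter> D)"
  proof -
    have "(\<Sum>u\<in>D. (if E u v then 1 else 0::nat)) = card {u\<in>D. E u v}"
      using fD sum.inter_filter[of D "\<lambda>_. 1::nat" "\<lambda>u. E u v"] by simp
    also have "{u\<in>D. E u v} = nbhd V E v \<inter> D" using G D by (auto simp: nbhd_def simple_graph_def)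
    finally show ?thesis .
  qed
  have "phi V E D = (\<Sum>u\<in>D. card (nbhd V E u - insert v D)) + card (nbhd V E v \<inter> D)"
  proof -
    have "phi V E D = (\<Sum>u\<in>D. card (nbhd V E u - insert v D) + (if E u v then 1 else 0))"
      unfolding phi_def by (rule sum.cong) (auto simp: 2)
    also have "\<dots> = (\<Sum>u\<in>D. card (nbhd V E u - insert v D)) + (\<Sum>u\<in>D. (if E u v then 1 else 0::nat))"
      by (rule sum.distrib)
    finally show ?thesis using 3 by simp
  qed
  moreover have "phi V E (insert v D) = card (nbhd V E v - D) + (\<Sum>u\<in>D. card (nbhd V E u - insert v D))"
    unfolding phi_def using fD v 1 by simp
  ultimately show ?thesis by simp
qed


lemma phi_step:
  assumes G: "simple_graph V E" and R: "regular V E (k+1)" and v: "v \<in> V" "v \<notin> D" and D: "D \<subseteq> V"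
  shows "phi V E (insert v D) + 2 * card (nbhd V E v \<inter> D) = phi V E D + (k + 1)"
proof -
  have f: "finite (nbhd V E v)" using nbhd_finite[OF G] .
  have "card (nbhd V E v) = k + 1" using R v by (simp add: regular_def)
  moreover have "card (nbhd V E v) = card (nbhd V E v \<inter> D) + card (nbhd V E v - D)"
    using f by (metis card_Int_Diff)
  ultimately show ?thesis using phi_insert[OF G v D] by linarith
qed

lemma conv_sub: "S0 \<subseteq> V \<Longrightarrow> converted V E k S0 t \<subseteq> V"
  by (induction t) auto

lemma conv_mono: "s \<le> t \<Longrightarrow> converted V E k S0 s \<subseteq> converted V E k S0 t"
proof (induction t)
  case 0 then show ?case by simp
next
  case (Suc t) then show ?case by (cases "s = Suc t") auto
qed

lemma lemA:
  assumes G: "simple_graph V E" and R: "regular V E (k+1)" and S: "S0 \<subseteq> V" and k: "k \<ge> 1"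
    and F: "finite F" "F \<subseteq> converted V E k S0 (Suc t) - converted V E k S0 t"
  shows "phi V E (converted V E k S0 t \<union> F) + (k-1) * card F \<le> phi V E (converted V E k S0 t)"
  using F
proof (induction F rule: finite_induct)
  case empty then show ?case by simp
next
  case (insert x F)
  let ?C = "converted V E k S0 t"
  have xV: "x \<in> V" and xk: "card (nbhd V E x \<inter> ?C) \<ge> k" and xC: "x \<notin> ?C"
    using insert.prems by auto
  have DV: "?C \<union> F \<subseteq> V" using insert.prems conv_sub[OF S, of E k "Suc t"] conv_sub[OF S, of E k t] by auto
  have xD: "x \<notin> ?C \<union> F" using xC insert.hyps by auto
  have st: "phi V E (insert x (?C \<union> F)) + 2 * card (nbhd V E x \<inter> (?C \<union> F)) = phi V E (?C \<union> F) + (k + 1)"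
    using phi_step[OF G R xV xD DV] .
  have "card (nbhd V E x \<inter> ?C) \<le> card (nbhd V E x \<inter> (?C \<union> F))"
    by (rule card_mono) (use nbhd_finite[OF G] in auto)
  with xk have a: "card (nbhd V E x \<inter> (?C \<union> F)) \<ge> k" by linarith
  have IH: "phi V E (?C \<union> F) + (k-1) * card F \<le> phi V E ?C" using insert by auto
  have "card (insert x F) = Suc (card F)" using insert.hyps by simp
  moreover have m: "(k-1) * Suc (card F) = (k-1) + (k-1) * card F" by simp
  moreover have "phi V E (insert x (?C \<union> F)) + (k-1) \<le> phi V E (?C \<union> F)" using st a k by linarith
  ultimately show ?case using IH by simp
qed

lemma lemB:
  assumes G: "simple_graph V E" and R: "regular V E (k+1)" and S: "S0 \<subseteq> V" and k: "k \<ge> 1"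
  shows "phi V E (converted V E k S0 t) + (k-1) * card (converted V E k S0 t - S0) \<le> phi V E S0"
proof (induction t)
  case 0 then show ?case by simp
next
  case (Suc t)
  let ?C = "converted V E k S0 t" and ?C' = "converted V E k S0 (Suc t)"
  have fV: "finite V" using G by (simp add: simple_graph_def)
  have sub: "?C \<subseteq> ?C'" by auto
  have S0C: "S0 \<subseteq> ?C" using conv_mono[of 0 t V E k S0] by simp
  have fin: "finite (?C' - ?C)" using conv_sub[OF S, of E k "Suc t"] fV finite_subset by blast
  have A: "phi V E (?C \<union> (?C' - ?C)) + (k-1) * card (?C' - ?C) \<le> phi V E ?C"
    using lemA[OF G R S k fin] by blast
  have eq: "?C \<union> (?C' - ?C) = ?C'" using sub by blast
  have fC: "finite ?C'" using conv_sub[OF S, of E k "Suc t"] fV finite_subset by blast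
  have "card (?C' - S0) = card (?C' - ?C) + card (?C - S0)"
  proof -
    have "?C' - S0 = (?C' - ?C) \<union> (?C - S0)" using sub S0C by blast
    moreover have "(?C' - ?C) \<inter> (?C - S0) = {}" by blast
    moreover have "finite (?C' - ?C)" "finite (?C - S0)" using fC sub finite_subset by auto
    ultimately show ?thesis by (simp add: card_Un_disjoint)
  qed
  then have m: "(k-1) * card (?C' - S0) = (k-1) * card (?C' - ?C) + (k-1) * card (?C - S0)"
    by (simp add: add_mult_distrib2)
  have A': "phi V E ?C' + (k-1) * card (?C' - ?C) \<le> phi V E ?C" using A eq by simp
  show ?case using A' m Suc.IH by linarith
qed


lemma conv_all:
  assumes "finite A" "\<forall>v\<in>A. \<exists>t. v \<in> converted V E k S0 t"
  shows "\<exists>T. A \<subseteq> converted V E k S0 T"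
  using assms
proof (induction A rule: finite_induct)
  case empty then show ?case by simp
next
  case (insert x F)
  then obtain T where T: "F \<subseteq> converted V E k S0 T" by auto
  obtain t where t: "x \<in> converted V E k S0 t" using insert.prems by auto
  have "converted V E k S0 T \<subseteq> converted V E k S0 (max T t)"
       "converted V E k S0 t \<subseteq> converted V E k S0 (max T t)"
    using conv_mono[of T "max T t" V E k S0] conv_mono[of t "max T t" V E k S0] by auto
  then show ?case using T t by blast
qed

theorem proposition3p1:
  fixes V :: "'a set" and E :: "'a \<Rightarrow> 'a \<Rightarrow> bool" and S0 :: "'a set" and k :: nat
  assumes "k \<ge> 2"
    and "simple_graph V E"
    and "regular V E (k + 1)"
    and "conversion_set V E k S0"
    and "card S0 = k"
  shows "real (card (V - S0)) < (real k * (real k + 1) - 1) / (real k - 1)"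
proof -
  note G = assms(2) and R = assms(3)
  have k1: "k \<ge> 1" using assms(1) by simp
  have S: "S0 \<subseteq> V" and all: "\<forall>v\<in>V. \<exists>t. v \<in> converted V E k S0 t"
    using assms(4) by (auto simp: conversion_set_def)
  have fV: "finite V" using G by (simp add: simple_graph_def)
  have dpos: "real k - 1 > 0" using assms(1) by simp
  show ?thesis
  proof (cases "card (V - S0) = 0")
    case True
    have "k \<le> k * (k + 1)" by simp
    then have "2 \<le> k * (k + 1)" using assms(1) by linarith
    then have "real 2 \<le> real (k * (k + 1))" by (simp only: of_nat_le_iff)
    then have "real k * (real k + 1) - 1 > 0" by (simp add: algebra_simps)
    then show ?thesis using True dpos by simp
  next
    case False
    let ?C = "converted V E k S0"
    obtain T where "V \<subseteq> ?C T" using conv_all[OF fV all] by blast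
    then have "\<exists>T. ?C T = V" using conv_sub[OF S] by blast
    define T0 where "T0 = (LEAST T. ?C T = V)"
    have T0: "?C T0 = V" unfolding T0_def by (rule LeastI_ex) fact
    have "V - S0 \<noteq> {}" using False by (metis card.empty)
    then have "T0 \<noteq> 0" using T0 by auto
    then obtain t where tT: "T0 = Suc t" using not0_implies_Suc by blast
    have "?C t \<noteq> V" using tT T0_def not_less_Least[of t "\<lambda>T. ?C T = V"] by auto
    then obtain w where w: "w \<in> V" "w \<notin> ?C t" using conv_sub[OF S, of E k t] by blast
    define D where "D = V - {w}"
    have Ct: "?C t \<subseteq> V" using conv_sub[OF S] by blast
    have S0C: "S0 \<subseteq> ?C t" using conv_mono[of 0 t V E k S0] by simp
    have fin: "finite (D - ?C t)" using fV D_def by simp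
    have A: "phi V E (?C t \<union> (D - ?C t)) + (k-1) * card (D - ?C t) \<le> phi V E (?C t)"
      by (rule lemA[OF G R S k1 fin]) (use T0 tT D_def in auto)
    have eqD: "?C t \<union> (D - ?C t) = D" using Ct w D_def by auto
    have B: "phi V E (?C t) + (k-1) * card (?C t - S0) \<le> phi V E S0" using lemB[OF G R S k1] .
    have fD: "finite D" using fV D_def by simp
    have cD: "card (D - S0) = card (D - ?C t) + card (?C t - S0)"
    proof -
      have "D - S0 = (D - ?C t) \<union> (?C t - S0)" using Ct w D_def S0C by blast
      moreover have "(D - ?C t) \<inter> (?C t - S0) = {}" by blast
      moreover have "finite (D - ?C t)" "finite (?C t - S0)" using fD Ct fV finite_subset by auto
      ultimately show ?thesis by (simp add: card_Un_disjoint)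
    qed
    have wS: "w \<notin> S0" using w S0C by blast
    have cD2: "card (D - S0) = card (V - S0) - 1"
    proof -
      have "D - S0 = (V - S0) - {w}" using D_def by blast
      then show ?thesis using wS w by simp
    qed
    have "\<And>x. nbhd V E x - V = {}" by (auto simp: nbhd_def)
    then have phiV: "phi V E V = 0" unfolding phi_def by (simp only: card.empty sum.neutral_const)
    have wD: "w \<notin> D" "D \<subseteq> V" using D_def by auto
    have insD: "insert w D = V" using D_def w by auto
    have st: "phi V E V + 2 * card (nbhd V E w \<inter> D) = phi V E D + (k + 1)"
      using phi_step[OF G R w(1) wD] insD by simp
    have "nbhd V E w \<inter> D = nbhd V E w" using G D_def by (auto simp: nbhd_def simple_graph_def)
    then have "card (nbhd V E w \<inter> D) = k + 1" using R w by (simp add: regular_def)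
    with st phiV have phiD: "phi V E D = k + 1" by simp
    have fS: "finite S0" using fV S finite_subset by blast
    have "phi V E S0 \<le> (\<Sum>u\<in>S0. k + 1)" unfolding phi_def
    proof (rule sum_mono)
      fix u assume "u \<in> S0"
      then have "card (nbhd V E u) = k + 1" using R S by (auto simp: regular_def)
      then show "card (nbhd V E u - S0) \<le> k + 1" using nbhd_finite[OF G]
        by (metis card_mono Diff_subset)
    qed
    then have phiS: "phi V E S0 \<le> k * (k + 1)" using assms(5) by simp
    have A2: "k + 1 + (k-1) * card (D - ?C t) \<le> phi V E (?C t)" using A eqD phiD by simp
    have "(k-1) * card (D - S0) = (k-1) * card (D - ?C t) + (k-1) * card (?C t - S0)"
      using cD by (simp add: add_mult_distrib2)
    then have "k + 1 + (k-1) * card (D - S0) \<le> phi V E S0" using A2 B by linarith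
    then have "k + 1 + (k-1) * (card (V - S0) - 1) \<le> k * (k + 1)"
      using cD2 phiS by (metis order.trans)
    moreover obtain m where m: "card (V - S0) = Suc m" using False not0_implies_Suc by blast
    moreover have "(k-1) * Suc m + 2 = k + 1 + (k-1) * m" using k1 by simp
    ultimately have ineq: "(k-1) * card (V - S0) + 2 \<le> k * (k + 1)" by simp
    then have "real ((k-1) * card (V - S0) + 2) \<le> real (k * (k + 1))" by (simp only: of_nat_le_iff)
    then have "(real k - 1) * real (card (V - S0)) + 2 \<le> real k * (real k + 1)"
      using k1 by (simp add: of_nat_diff algebra_simps)
    then have "real (card (V - S0)) * (real k - 1) < real k * (real k + 1) - 1"
      by (simp add: algebra_simps)
    then show ?thesis using dpos by (simp add: pos_less_divide_eq)
  qed
qed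

end
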